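(* Let $V$ be a finite-dimensional real vector space, $M$ a smooth manifold, $f\colon M\to V$ a smooth function, and $x_1,\ldots,x_m$ points of $M$ such that $0$ lies in the interior of the convex hull of $f(x_1),\ldots,f(x_m)$ and \[V=df_{x_1}T_{x_1}(M)+\cdots+df_{x_m}T_{x_m}(M).\] Then, for all $n$ sufficiently large, there exist $z_1,\ldots,z_n\in M$ such that $\sum_{i=1}^n f(z_i)=0$ and \[V=df_{z_1}T_{z_1}(M)+\cdots+df_{z_n}T_{z_n}(M).\]
   Context: Here $df_x\colon T_x(M)\to V$ denotes the differential of $f$ at $x$. *)

theory Defs
  imports "HOL-Analysis.Analysis"
begin

text \<open>D vs x is the iterated derivative
  of order length vs at x, applied to the directions in vs.\<close>
definition smooth_on :: "'a::euclidean_space set \<Rightarrow> ('a \<Rightarrow> 'b::euclidean_space) \<Rightarrow> bool" where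
  "smooth_on S f \<longleftrightarrow> open S \<and>
     (\<exists>D :: 'a list \<Rightarrow> 'a \<Rightarrow> 'b.
        (\<forall>x\<in>S. D [] x = f x) \<and>
        (\<forall>vs. \<forall>x\<in>S. (D vs has_derivative (\<lambda>h. D (h # vs) x)) (at x)))"

definition chart :: "'m topology \<Rightarrow> ('m set \<times> ('m \<Rightarrow> 'e::euclidean_space)) \<Rightarrow> bool" where
  "chart X c \<longleftrightarrow> openin X (fst c) \<and> open (snd c ` fst c) \<and>
     homeomorphic_map (subtopology X (fst c)) (top_of_set (snd c ` fst c)) (snd c)"

definition smooth_atlas :: "'m topology \<Rightarrow> ('m set \<times> ('m \<Rightarrow> 'e::euclidean_space)) set \<Rightarrow> bool" where
  "smooth_atlas X A \<longleftrightarrow> (\<forall>c\<in>A. chart X c) \<and> (\<Union>c\<in>A. fst c) = topspace X \<and>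
     (\<forall>c\<in>A. \<forall>d\<in>A. smooth_on (snd c ` (fst c \<inter> fst d)) (snd d \<circ> inv_into (fst c) (snd c)))"

definition smooth_manifold :: "'m topology \<Rightarrow> ('m set \<times> ('m \<Rightarrow> 'e::euclidean_space)) set \<Rightarrow> bool" where
  "smooth_manifold X A \<longleftrightarrow> Hausdorff_space X \<and> second_countable X \<and> smooth_atlas X A"

definition smooth_map :: "'m topology \<Rightarrow> ('m set \<times> ('m \<Rightarrow> 'e::euclidean_space)) set
    \<Rightarrow> ('m \<Rightarrow> 'v::euclidean_space) \<Rightarrow> bool" where
  "smooth_map X A f \<longleftrightarrow> (\<forall>c\<in>A. smooth_on (snd c ` fst c) (f \<circ> inv_into (fst c) (snd c)))"

text \<open>The image df_x(T_x M) of the differential, computed in a chart around x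
  (independent of the chart by smooth compatibility).\<close>
definition diff_image :: "('m set \<times> ('m \<Rightarrow> 'e::euclidean_space)) set
    \<Rightarrow> ('m \<Rightarrow> 'v::euclidean_space) \<Rightarrow> 'm \<Rightarrow> 'v set" where
  "diff_image A f x = {y. \<exists>c\<in>A. x \<in> fst c \<and> (\<exists>f'.
       ((f \<circ> inv_into (fst c) (snd c)) has_derivative f') (at (snd c x)) \<and> y \<in> range f')}"

end

theory Submission
  imports Defs
begin


lemma smooth_on_deriv:
  assumes "smooth_on S F" "y \<in> S"
  shows "\<exists>F'. (F has_derivative F') (at y)"
proof -
  from assms(1) obtain D where S: "open S" and D0: "\<forall>x\<in>S. D [] x = F x"
    and DD: "\<forall>vs. \<forall>x\<in>S. (D vs has_derivative (\<lambda>h. D (h # vs) x)) (at x)"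
    unfolding smooth_on_def by blast
  show ?thesis
    using has_derivative_transform_within_open[OF DD[THEN spec[where x="[]"], THEN bspec, OF assms(2)] S assms(2)] D0
    by auto
qed

lemma smooth_on_cont:
  assumes "smooth_on S F"
  shows "continuous_on S F"
proof -
  have "isCont F y" if "y \<in> S" for y
    using smooth_on_deriv[OF assms that] has_derivative_continuous by blast
  then show ?thesis by (simp add: continuous_at_imp_continuous_on)
qed

lemma chart_facts:
  assumes "smooth_manifold X A" "c \<in> A"
  shows "openin X (fst c)" "fst c \<subseteq> topspace X" "inj_on (snd c) (fst c)" "open (snd c ` fst c)"
proof -
  have ch: "chart X c" using assms unfolding smooth_manifold_def smooth_atlas_def by blast
  then show o: "openin X (fst c)" "open (snd c ` fst c)" unfolding chart_def by auto
  then show "fst c \<subseteq> topspace X" by (simp add: openin_subset)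
  have "inj_on (snd c) (topspace (subtopology X (fst c)))"
    using ch unfolding chart_def using homeomorphic_imp_injective_map by blast
  then show "inj_on (snd c) (fst c)" using o(1) openin_subset[OF o(1)]
    by (simp add: Int_absorb1)
qed

lemma zero_diff_image:
  assumes "smooth_manifold X A" "smooth_map X A f" "z \<in> topspace X"
  shows "0 \<in> diff_image A f z"
proof -
  have "(\<Union>c\<in>A. fst c) = topspace X" using assms(1) unfolding smooth_manifold_def smooth_atlas_def by blast
  then obtain c where c: "c \<in> A" "z \<in> fst c" using assms(3) by blast
  have "smooth_on (snd c ` fst c) (f \<circ> inv_into (fst c) (snd c))"
    using assms(2) c unfolding smooth_map_def by blast
  then obtain F' where F': "((f \<circ> inv_into (fst c) (snd c)) has_derivative F') (at (snd c z))"
    using smooth_on_deriv c by blast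
  then have "F' 0 = 0" using has_derivative_linear linear_0 by blast
  then have "0 \<in> range F'" by (metis rangeI)
  then show ?thesis unfolding diff_image_def using c F' by blast
qed



lemma hull_index_weights:
  fixes v :: "nat \<Rightarrow> 'a::real_vector"
  assumes "finite I" "y \<in> convex hull (v ` I)"
  shows "\<exists>\<mu>. (\<forall>i\<in>I. 0 \<le> \<mu> i) \<and> sum \<mu> I = 1 \<and> (\<Sum>i\<in>I. \<mu> i *\<^sub>R v i) = y"
proof -
  have fin: "finite (v ` I)" using assms(1) by simp
  obtain u where u0: "\<forall>x\<in>v ` I. 0 \<le> u x" and u1: "sum u (v ` I) = 1"
    and uy: "(\<Sum>x\<in>v ` I. u x *\<^sub>R x) = y"
    using assms(2) unfolding convex_hull_finite[OF fin] by blast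
  define cnt where "cnt z = card {j \<in> I. v j = z}" for z
  define \<mu> where "\<mu> i = u (v i) / real (cnt (v i))" for i
  have cpos: "cnt (v i) > 0" if "i \<in> I" for i
    unfolding cnt_def using assms(1) that by (auto simp: card_gt_0_iff)
  have key: "(\<Sum>i\<in>{j \<in> I. v j = z}. \<mu> i) = u z" if "z \<in> v ` I" for z
  proof -
    have "(\<Sum>i\<in>{j \<in> I. v j = z}. \<mu> i) = (\<Sum>i\<in>{j \<in> I. v j = z}. u z / real (cnt z))"
      by (rule sum.cong) (auto simp: \<mu>_def)
    also have "\<dots> = u z" using that cpos unfolding cnt_def by fastforce
    finally show ?thesis .
  qed
  have keyv: "(\<Sum>i\<in>{j \<in> I. v j = z}. \<mu> i *\<^sub>R v i) = u z *\<^sub>R z" if "z \<in> v ` I" for z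
  proof -
    have "(\<Sum>i\<in>{j \<in> I. v j = z}. \<mu> i *\<^sub>R v i) = (\<Sum>i\<in>{j \<in> I. v j = z}. \<mu> i) *\<^sub>R z"
      by (simp add: scaleR_sum_left)
    then show ?thesis using key[OF that] by simp
  qed
  have "sum \<mu> I = (\<Sum>z\<in>v ` I. \<Sum>i\<in>{j \<in> I. v j = z}. \<mu> i)"
    using sum.image_gen[OF assms(1), of \<mu> v] by simp
  also have "\<dots> = 1" using key u1 by simp
  finally have s1: "sum \<mu> I = 1" .
  have "(\<Sum>i\<in>I. \<mu> i *\<^sub>R v i) = (\<Sum>z\<in>v ` I. \<Sum>i\<in>{j \<in> I. v j = z}. \<mu> i *\<^sub>R v i)"
    using sum.image_gen[OF assms(1), of "\<lambda>i. \<mu> i *\<^sub>R v i" v] by simp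
  also have "\<dots> = y" using keyv uy by simp
  moreover have "\<forall>i\<in>I. 0 \<le> \<mu> i" using u0 cpos unfolding \<mu>_def by auto
  ultimately show ?thesis using s1 by blast
qed

lemma pos_weights:
  fixes v :: "nat \<Rightarrow> 'a::real_normed_vector"
  assumes "finite I" "I \<noteq> {}" "0 \<in> interior (convex hull (v ` I))"
  shows "\<exists>lw. (\<forall>i\<in>I. 0 < lw i) \<and> sum lw I = 1 \<and> (\<Sum>i\<in>I. lw i *\<^sub>R v i) = 0"
proof -
  obtain e where e: "e > 0" "ball 0 e \<subseteq> convex hull (v ` I)"
    using assms(3) by (meson open_contains_ball interior_subset mem_interior)
  define k where "k = real (card I)"
  have k: "k > 0" using assms(1,2) unfolding k_def by (simp add: card_gt_0_iff)
  define c where "c = (1 / k) *\<^sub>R (\<Sum>i\<in>I. v i)"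
  define q where "q = norm c + 1"
  have q: "q > 0" unfolding q_def using norm_ge_zero[of c] by linarith
  define \<epsilon> where "\<epsilon> = e / (2 * q)"
  have \<epsilon>: "\<epsilon> > 0" using e unfolding \<epsilon>_def using q by simp
  have "norm (- (\<epsilon> *\<^sub>R c)) = \<epsilon> * norm c" using \<epsilon> by simp
  also have "\<dots> < e"
  proof -
    have "\<epsilon> * norm c \<le> \<epsilon> * q" using \<epsilon> unfolding q_def by simp
    also have "\<dots> = e / 2" unfolding \<epsilon>_def using q by (simp add: field_simps)
    finally show ?thesis using e by linarith
  qed
  finally have "- (\<epsilon> *\<^sub>R c) \<in> convex hull (v ` I)" using e by auto
  then obtain \<mu> where \<mu>0: "\<forall>i\<in>I. 0 \<le> \<mu> i" and \<mu>1: "sum \<mu> I = 1"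
    and \<mu>v: "(\<Sum>i\<in>I. \<mu> i *\<^sub>R v i) = - (\<epsilon> *\<^sub>R c)"
    using hull_index_weights[OF assms(1)] by blast
  define lw where "lw i = (\<epsilon> / k + \<mu> i) / (1 + \<epsilon>)" for i
  have p: "\<forall>i\<in>I. 0 < lw i" using \<mu>0 \<epsilon> k unfolding lw_def by (auto intro!: divide_pos_pos add_pos_nonneg)
  have "sum lw I = (\<Sum>i\<in>I. \<epsilon> / k + \<mu> i) / (1 + \<epsilon>)"
    unfolding lw_def by (simp add: sum_divide_distrib)
  also have "\<dots> = (\<epsilon> + 1) / (1 + \<epsilon>)" using k \<mu>1 unfolding k_def by (simp add: sum.distrib)
  also have "\<dots> = 1" using \<epsilon> by simp
  finally have s: "sum lw I = 1" .
  have "(\<Sum>i\<in>I. lw i *\<^sub>R v i) = (1 / (1 + \<epsilon>)) *\<^sub>R ((\<epsilon> / k) *\<^sub>R (\<Sum>i\<in>I. v i) + (\<Sum>i\<in>I. \<mu> i *\<^sub>R v i))"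
    unfolding lw_def by (simp add: scaleR_sum_right sum.distrib scaleR_add_left divide_inverse algebra_simps)
  also have "\<dots> = 0" unfolding \<mu>v c_def using k by simp
  finally show ?thesis using p s by blast
qed



lemma rounding:
  assumes "m \<ge> 1" "\<forall>i\<in>{1..m}. 0 \<le> lw i" "sum lw {1..m} = (1::real)"
  shows "\<exists>M::nat\<Rightarrow>nat. sum M {1..m} = n \<and> (\<forall>i\<in>{1..m}. \<bar>real (M i) - real n * lw i\<bar> \<le> real m)"
proof -
  define R where "R i = nat \<lfloor>real n * lw i\<rfloor>" for i
  have R: "real (R i) \<le> real n * lw i \<and> real n * lw i < real (R i) + 1" if "i \<in> {1..m}" for i
  proof -
    have "0 \<le> real n * lw i" using assms(2) that by simp
    then show ?thesis unfolding R_def by linarith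
  qed
  define s where "s = sum R {2..m}"
  have split: "{1..m} = insert 1 {2..m}" using assms(1) by auto
  have sl: "sum lw {1..m} = lw 1 + sum lw {2..m}" unfolding split by simp
  have rs: "real s \<le> real n * sum lw {2..m}"
    unfolding s_def of_nat_sum sum_distrib_left by (rule sum_mono) (use R in auto)
  have rs2: "real n * sum lw {2..m} - real s \<le> real m"
  proof -
    have "real n * sum lw {2..m} - real s = (\<Sum>i\<in>{2..m}. real n * lw i - real (R i))"
      unfolding s_def of_nat_sum sum_distrib_left sum_subtractf by simp
    also have "\<dots> \<le> (\<Sum>i\<in>{2..m}. 1)" proof (rule sum_mono)
      fix i assume "i \<in> {2..m}"
      then have "i \<in> {1..m}" by simp
      from R[OF this] show "real n * lw i - real (R i) \<le> 1" by linarith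
    qed
    also have "\<dots> \<le> real m" by simp
    finally show ?thesis .
  qed
  have l1: "0 \<le> lw 1" using assms(1,2) by auto
  have "real s \<le> real n" using rs sl assms(3) l1
    by (smt (verit) mult_left_le of_nat_0_le_iff)
  then have sn: "s \<le> n" by simp
  define M where "M = R(1 := n - s)"
  have "sum M {1..m} = M 1 + sum M {2..m}" unfolding split by simp
  also have "sum M {2..m} = s" unfolding s_def M_def by (rule sum.cong) auto
  finally have sM: "sum M {1..m} = n" using sn unfolding M_def by simp
  have "\<bar>real (M i) - real n * lw i\<bar> \<le> real m" if "i \<in> {1..m}" for i
  proof (cases "i = 1")
    case True
    have "real (M i) - real n * lw i = real n * sum lw {2..m} - real s"
    proof -
      have "real n = real n * (lw 1 + sum lw {2..m})" using sl assms(3) by simp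
      then show ?thesis using True sn unfolding M_def by (simp add: of_nat_diff algebra_simps)
    qed
    then show ?thesis using rs rs2 by simp
  next
    case False
    then show ?thesis using R[OF that] assms(1) unfolding M_def by auto
  qed
  then show ?thesis using sM by blast
qed



lemma perturb:
  fixes f :: "'m \<Rightarrow> 'v::euclidean_space"
    and A :: "('m set \<times> ('m \<Rightarrow> 'e::euclidean_space)) set"
  assumes sm: "smooth_manifold X A" and smf: "smooth_map X A f"
    and xin: "\<forall>i\<in>{1..m}. x i \<in> topspace X"
    and span: "\<forall>v. \<exists>w. (\<forall>i\<in>{1..m}. w i \<in> diff_image A f (x i)) \<and> v = (\<Sum>i=1..m. w i)"
  shows "\<exists>q :: nat \<Rightarrow> 'v \<Rightarrow> 'v \<Rightarrow> 'm. \<exists>\<delta>>0. \<forall>g\<in>ball (\<Sum>i=1..m. \<Sum>b\<in>(Basis::'v set). f (x i)) \<delta>.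
           \<exists>t. (\<forall>i\<in>{1..m}. \<forall>b\<in>(Basis::'v set). q i b t \<in> topspace X) \<and> (\<Sum>i=1..m. \<Sum>b\<in>(Basis::'v set). f (q i b t)) = g"
proof -
  obtain W where W: "\<And>b. (\<forall>i\<in>{1..m}. W b i \<in> diff_image A f (x i)) \<and> b = (\<Sum>i=1..m. W b i)"
    using choice[OF span] by blast
  have "\<forall>b. \<forall>i. \<exists>y. i \<in> {1..m} \<longrightarrow> (fst y \<in> A \<and> x i \<in> fst (fst y) \<and>
      ((f \<circ> inv_into (fst (fst y)) (snd (fst y))) has_derivative fst (snd y)) (at (snd (fst y) (x i))) \<and> W b i = fst (snd y) (snd (snd y)))"
  proof (intro allI)
    fix b i
    show "\<exists>y. i \<in> {1..m} \<longrightarrow> (fst y \<in> A \<and> x i \<in> fst (fst y) \<and>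
      ((f \<circ> inv_into (fst (fst y)) (snd (fst y))) has_derivative fst (snd y)) (at (snd (fst y) (x i))) \<and> W b i = fst (snd y) (snd (snd y)))"
    proof (cases "i \<in> {1..m}")
      case True
      then have "W b i \<in> diff_image A f (x i)" using W by blast
      then obtain c f' u where "c \<in> A" "x i \<in> fst c"
        "((f \<circ> inv_into (fst c) (snd c)) has_derivative f') (at (snd c (x i)))" "W b i = f' u"
        unfolding diff_image_def by blast
      then show ?thesis by (intro exI[of _ "(c, f', u)"]) simp
    next
      case False
      then show ?thesis by blast
    qed
  qed
  then obtain Y where Y: "\<And>b i. i \<in> {1..m} \<Longrightarrow> (fst (Y b i) \<in> A \<and> x i \<in> fst (fst (Y b i)) \<and>
      ((f \<circ> inv_into (fst (fst (Y b i))) (snd (fst (Y b i)))) has_derivative fst (snd (Y b i))) (at (snd (fst (Y b i)) (x i))) \<and> W b i = fst (snd (Y b i)) (snd (snd (Y b i))))"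
    unfolding choice_iff by blast
  define C where "C b i = fst (Y b i)" for b i
  define Fd where "Fd b i = fst (snd (Y b i))" for b i
  define U where "U b i = snd (snd (Y b i))" for b i
  have CFU: "\<And>b i. i \<in> {1..m} \<Longrightarrow> C b i \<in> A \<and> x i \<in> fst (C b i) \<and>
      ((f \<circ> inv_into (fst (C b i)) (snd (C b i))) has_derivative Fd b i) (at (snd (C b i) (x i))) \<and> W b i = Fd b i (U b i)"
    unfolding C_def Fd_def U_def using Y by blast
  define ph where "ph b i = snd (C b i)" for b i
  define V where "V b i = fst (C b i)" for b i
  define F where "F b i = f \<circ> inv_into (V b i) (ph b i)" for b i
  define l where "l b i t = ph b i (x i) + (t \<bullet> b) *\<^sub>R U b i" for b i and t :: 'v
  define q where "q i b t = inv_into (V b i) (ph b i) (l b i t)" for b i t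
  define S where "S = (\<Inter>i\<in>{1..m}. \<Inter>b\<in>Basis. l b i -` (ph b i ` V b i))"
  define G where "G t = (\<Sum>i=1..m. \<Sum>b\<in>Basis. F b i (l b i t))" for t
  have cfacts: "openin X (V b i) \<and> V b i \<subseteq> topspace X \<and> inj_on (ph b i) (V b i) \<and> open (ph b i ` V b i)
     \<and> smooth_on (ph b i ` V b i) (F b i)" if "i \<in> {1..m}" for b i
    using chart_facts[OF sm, of "C b i"] CFU[OF that] smf unfolding smooth_map_def V_def ph_def F_def by blast
  have lcont: "continuous_on UNIV (l b i)" for b i unfolding l_def by (intro continuous_intros)
  have Sopen: "open S" unfolding S_def
    by (intro open_INT finite_atLeastAtMost finite_Basis ballI open_vimage lcont) (use cfacts in blast)
  have l0: "l b i 0 = ph b i (x i)" for b i unfolding l_def by simp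
  have S0: "0 \<in> S"
  proof -
    have "l b i 0 \<in> ph b i ` V b i" if "i \<in> {1..m}" for i and b :: 'v
      unfolding l0 V_def ph_def using CFU[OF that] by (intro imageI) blast
    then show ?thesis unfolding S_def by blast
  qed
  have Gcont: "continuous_on S G" unfolding G_def
  proof (intro continuous_on_sum)
    fix i and b :: 'v assume ib: "i \<in> {1..m}" "b \<in> Basis"
    have "continuous_on (ph b i ` V b i) (F b i)" using cfacts[OF ib(1)] smooth_on_cont by blast
    moreover have "l b i ` S \<subseteq> ph b i ` V b i" using ib unfolding S_def by blast
    ultimately show "continuous_on S (\<lambda>t. F b i (l b i t))"
      using continuous_on_compose2[OF _ continuous_on_subset[OF lcont subset_UNIV]] by blast
  qed
  have Gder: "(G has_derivative (\<lambda>h. (\<Sum>i=1..m. \<Sum>b\<in>Basis. Fd b i ((h \<bullet> b) *\<^sub>R U b i)))) (at 0)"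
    unfolding G_def
  proof (intro has_derivative_sum)
    fix i and b :: 'v assume ib: "i \<in> {1..m}" "b \<in> Basis"
    have dl: "(l b i has_derivative (\<lambda>h. (h \<bullet> b) *\<^sub>R U b i)) (at 0)" unfolding l_def
      by (auto intro!: derivative_eq_intros)
    have dF: "(F b i has_derivative Fd b i) (at (l b i 0))"
      using CFU[OF ib(1)] unfolding l0 F_def V_def ph_def by blast
    show "((\<lambda>t. F b i (l b i t)) has_derivative (\<lambda>h. Fd b i ((h \<bullet> b) *\<^sub>R U b i))) (at 0)"
      using has_derivative_compose[OF dl dF] by simp
  qed
  have Did: "(\<lambda>h. (\<Sum>i=1..m. \<Sum>b\<in>Basis. Fd b i ((h \<bullet> b) *\<^sub>R U b i))) = id"
  proof
    fix h :: 'v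
    have "(\<Sum>i=1..m. \<Sum>b\<in>Basis. Fd b i ((h \<bullet> b) *\<^sub>R U b i)) = (\<Sum>i=1..m. \<Sum>b\<in>Basis. (h \<bullet> b) *\<^sub>R W b i)"
    proof (intro sum.cong refl)
      fix i and b :: 'v assume ib: "i \<in> {1..m}" "b \<in> Basis"
      have "linear (Fd b i)" using CFU[OF ib(1)] has_derivative_linear by blast
      then show "Fd b i ((h \<bullet> b) *\<^sub>R U b i) = (h \<bullet> b) *\<^sub>R W b i"
        using CFU[OF ib(1)] by (simp add: linear_scale)
    qed
    also have "\<dots> = (\<Sum>b\<in>Basis. (h \<bullet> b) *\<^sub>R (\<Sum>i=1..m. W b i))"
      by (subst sum.swap) (simp add: scaleR_sum_right)
    also have "\<dots> = (\<Sum>b\<in>Basis. (h \<bullet> b) *\<^sub>R b)" by (intro sum.cong refl) (metis W)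
    also have "\<dots> = h" by (rule euclidean_representation)
    finally show "(\<Sum>i=1..m. \<Sum>b\<in>Basis. Fd b i ((h \<bullet> b) *\<^sub>R U b i)) = id h" by simp
  qed
  have "G 0 \<in> interior (G ` S)"
    by (rule sussmann_open_mapping[OF Sopen Gcont S0 Gder, of id])
       (use Did Sopen S0 interior_open bounded_linear_ident[unfolded id_def[symmetric]] in auto)
  then obtain \<delta> where \<delta>: "\<delta> > 0" "ball (G 0) \<delta> \<subseteq> G ` S"
    by (meson open_contains_ball open_interior interior_subset subset_trans)
  have each: "F b i (l b i 0) = f (x i)" if ib: "i \<in> {1..m}" for i and b :: 'v
  proof -
    have "inv_into (V b i) (ph b i) (ph b i (x i)) = x i"
      using cfacts[OF ib(1)] CFU[OF ib(1)] unfolding V_def by (auto intro: inv_into_f_f)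
    then show "F b i (l b i 0) = f (x i)" unfolding F_def l0 by simp
  qed
  have G0: "G 0 = (\<Sum>i=1..m. \<Sum>b\<in>(Basis::'v set). f (x i))" unfolding G_def
    using each by simp
  have "\<forall>g\<in>ball (\<Sum>i=1..m. \<Sum>b\<in>(Basis::'v set). f (x i)) \<delta>.
           \<exists>t. (\<forall>i\<in>{1..m}. \<forall>b\<in>(Basis::'v set). q i b t \<in> topspace X) \<and> (\<Sum>i=1..m. \<Sum>b\<in>(Basis::'v set). f (q i b t)) = g"
  proof
    fix g assume "g \<in> ball (\<Sum>i=1..m. \<Sum>b\<in>(Basis::'v set). f (x i)) \<delta>"
    then obtain t where t: "t \<in> S" "g = G t" using \<delta> G0 by auto
    have "q i b t \<in> topspace X" if "i \<in> {1..m}" "b \<in> Basis" for i b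
    proof -
      have "l b i t \<in> ph b i ` V b i" using t that unfolding S_def by blast
      then have "q i b t \<in> V b i" unfolding q_def by (rule inv_into_into)
      then show ?thesis using cfacts[OF that(1)] by blast
    qed
    moreover have "(\<Sum>i=1..m. \<Sum>b\<in>(Basis::'v set). f (q i b t)) = g"
      unfolding t G_def F_def q_def by simp
    ultimately show "\<exists>t. (\<forall>i\<in>{1..m}. \<forall>b\<in>(Basis::'v set). q i b t \<in> topspace X) \<and> (\<Sum>i=1..m. \<Sum>b\<in>(Basis::'v set). f (q i b t)) = g"
      by blast
  qed
  then show ?thesis using \<delta>(1) by blast
qed



lemma sum_list_upt1: "sum_list (map g [1..<m+1]) = sum g {1..m}"
proof -
  have "{1..<m+1} = {1..m}" by auto
  then show ?thesis by (simp only: interv_sum_list_conv_sum_set_nat set_upt)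
qed

lemma sum_list_upt1': "sum_list (map g [Suc 0..<Suc m]) = sum g {1..m}"
  using sum_list_upt1[of g m] by simp

lemma sum_list_replicate_R': "sum_list (replicate k a) = real k *\<^sub>R (a :: 'a::real_vector)"
  by (induct k) (auto simp: algebra_simps)

lemma length_concat_rep: "length (concat (replicate k xs)) = k * length xs"
  by (induct k) auto

lemma sum_list_concat_map: "sum_list (map f (concat xss)) = sum_list (map (\<lambda>xs. sum_list (map f xs)) xss)"
  by (induct xss) auto

lemma sum_list_replicate_R: "sum_list (map f (replicate k a)) = real k *\<^sub>R (f a :: 'a::real_vector)"
  by (induct k) (auto simp: algebra_simps)

lemma from_list:
  fixes f :: "'m \<Rightarrow> 'v::euclidean_space"
    and A :: "('m set \<times> ('m \<Rightarrow> 'e::euclidean_space)) set"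
  assumes sm: "smooth_manifold X A" and smf: "smooth_map X A f"
    and span: "\<forall>v. \<exists>w. (\<forall>i\<in>{1..m}. w i \<in> diff_image A f (x i)) \<and> v = (\<Sum>i=1..m. w i)"
    and len: "length zs = n" and top: "\<forall>z\<in>set zs. z \<in> topspace X"
    and pre: "zs = map x [1..<m+1] @ rest" and sum0: "sum_list (map f zs) = 0"
  shows "\<exists>z :: nat \<Rightarrow> 'm.
           (\<forall>i\<in>{1..n}. z i \<in> topspace X) \<and>
           (\<Sum>i=1..n. f (z i)) = 0 \<and>
           (\<forall>v. \<exists>w. (\<forall>i\<in>{1..n}. w i \<in> diff_image A f (z i)) \<and> v = (\<Sum>i=1..n. w i))"
proof -
  define z where "z i = zs ! (i - 1)" for i
  have mn: "m \<le> n" using len pre by (simp del: upt_Suc)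
  have zt: "\<forall>i\<in>{1..n}. z i \<in> topspace X" unfolding z_def using top len by auto
  have "(\<Sum>i=1..n. f (z i)) = (\<Sum>i=0..<n. f (zs ! i))"
    unfolding z_def using sum.shift_bounds_Suc_ivl[of "\<lambda>i. f (zs ! (i - 1))" 0 n]
    by (simp add: atLeastLessThanSuc_atLeastAtMost)
  also have "\<dots> = sum_list (map f zs)" using len by (simp add: sum_list_sum_nth)
  finally have zs0: "(\<Sum>i=1..n. f (z i)) = 0" using sum0 by simp
  have zx: "z i = x i" if "i \<in> {1..m}" for i
    using that unfolding z_def pre by (auto simp: nth_append simp del: upt_Suc)
  have "\<exists>w. (\<forall>i\<in>{1..n}. w i \<in> diff_image A f (z i)) \<and> v = (\<Sum>i=1..n. w i)" for v
  proof -
    obtain w where w: "\<forall>i\<in>{1..m}. w i \<in> diff_image A f (x i)" "v = (\<Sum>i=1..m. w i)"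
      using span by blast
    define w' where "w' i = (if i \<le> m then w i else 0)" for i
    have "w' i \<in> diff_image A f (z i)" if "i \<in> {1..n}" for i
    proof (cases "i \<le> m")
      case True
      then show ?thesis using w zx[of i] that unfolding w'_def by auto
    next
      case False
      then show ?thesis using zero_diff_image[OF sm smf] zt that unfolding w'_def by auto
    qed
    moreover have "(\<Sum>i=1..n. w' i) = (\<Sum>i=1..m. w i)"
      by (rule sum.mono_neutral_cong_right) (use mn in \<open>auto simp: w'_def\<close>)
    ultimately show ?thesis using w by (intro exI[of _ w']) auto
  qed
  then show ?thesis using zt zs0 by blast
qed



theorem theorem2p10:
  fixes X :: "'m topology"
    and A :: "('m set \<times> ('m \<Rightarrow> 'e::euclidean_space)) set"
    and f :: "'m \<Rightarrow> 'v::euclidean_space"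
    and x :: "nat \<Rightarrow> 'm" and m :: nat
  assumes "smooth_manifold X A"
    and "smooth_map X A f"
    and "\<forall>i\<in>{1..m}. x i \<in> topspace X"
    and "0 \<in> interior (convex hull (f ` x ` {1..m}))"
    and "\<forall>v. \<exists>w. (\<forall>i\<in>{1..m}. w i \<in> diff_image A f (x i)) \<and> v = (\<Sum>i=1..m. w i)"
  shows "\<exists>N. \<forall>n\<ge>N. \<exists>z :: nat \<Rightarrow> 'm.
           (\<forall>i\<in>{1..n}. z i \<in> topspace X) \<and>
           (\<Sum>i=1..n. f (z i)) = 0 \<and>
           (\<forall>v. \<exists>w. (\<forall>i\<in>{1..n}. w i \<in> diff_image A f (z i)) \<and> v = (\<Sum>i=1..n. w i))"
proof -
  note sm = assms(1) and smf = assms(2) and xin = assms(3) and span = assms(5)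
  define v where "v i = f (x i)" for i
  define d where "d = DIM('v)"
  have m1: "m \<ge> 1"
  proof (rule ccontr)
    assume "\<not> m \<ge> 1" then have "{1..m} = {}" by auto
    then show False using assms(4) by simp
  qed
  have img: "f ` x ` {1..m} = v ` {1..m}" unfolding v_def by auto
  obtain lw where lw0: "\<forall>i\<in>{1..m}. 0 < lw i" and lw1: "sum lw {1..m} = 1"
    and lwv: "(\<Sum>i\<in>{1..m}. lw i *\<^sub>R v i) = 0"
    using pos_weights[of "{1..m}" v] assms(4) m1 unfolding img by auto
  obtain q :: "nat \<Rightarrow> 'v \<Rightarrow> 'v \<Rightarrow> 'm" and \<delta> where \<delta>: "\<delta> > 0"
    and qP: "\<forall>g\<in>ball (\<Sum>i=1..m. \<Sum>b\<in>(Basis::'v set). f (x i)) \<delta>.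
           \<exists>t. (\<forall>i\<in>{1..m}. \<forall>b\<in>(Basis::'v set). q i b t \<in> topspace X) \<and> (\<Sum>i=1..m. \<Sum>b\<in>(Basis::'v set). f (q i b t)) = g"
    using perturb[OF sm smf xin span] by blast
  define Cb where "Cb = real m * (\<Sum>i=1..m. norm (v i))"
  have Cb0: "Cb \<ge> 0" unfolding Cb_def by (simp add: sum_nonneg)
  define L :: nat where "L = nat \<lceil>Cb / \<delta>\<rceil> + 1"
  have L1: "L \<ge> 1" unfolding L_def by simp
  have LC: "real L * \<delta> > Cb"
  proof -
    have "real L > Cb / \<delta>" unfolding L_def by linarith
    then show ?thesis using \<delta> by (simp add: field_simps)
  qed
  define K where "K = real (1 + L * d + m)"
  define N :: nat where "N = nat \<lceil>\<Sum>i=1..m. K / lw i\<rceil>"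
  have NK: "real n * lw i \<ge> K" if "n \<ge> N" "i \<in> {1..m}" for n i
  proof -
    have "K / lw i \<le> (\<Sum>i=1..m. K / lw i)"
    proof (rule member_le_sum)
      fix j assume "j \<in> {1..m} - {i}"
      then have "lw j > 0" using lw0 by auto
      moreover have "K \<ge> 0" unfolding K_def by simp
      ultimately show "0 \<le> K / lw j" by simp
    qed (use that in auto)
    also have "\<dots> \<le> real N" unfolding N_def by linarith
    also have "\<dots> \<le> real n" using that by simp
    finally have "K / lw i \<le> real n" .
    then show ?thesis using lw0 that by (simp add: divide_le_eq mult.commute)
  qed
  have main: "\<exists>z :: nat \<Rightarrow> 'm.
           (\<forall>i\<in>{1..n}. z i \<in> topspace X) \<and>
           (\<Sum>i=1..n. f (z i)) = 0 \<and>
           (\<forall>v. \<exists>w. (\<forall>i\<in>{1..n}. w i \<in> diff_image A f (z i)) \<and> v = (\<Sum>i=1..n. w i))"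
    if nN: "n \<ge> N" for n
  proof -
    obtain M :: "nat \<Rightarrow> nat" where Msum: "sum M {1..m} = n"
      and Mb: "\<forall>i\<in>{1..m}. \<bar>real (M i) - real n * lw i\<bar> \<le> real m"
    proof -
      have "\<forall>i\<in>{1..m}. 0 \<le> lw i" using lw0 by (simp add: less_imp_le)
      then show ?thesis using rounding[OF m1 _ lw1, of n] that by blast
    qed
    have Mge: "M i \<ge> 1 + L * d" if "i \<in> {1..m}" for i
    proof -
      have "\<bar>real (M i) - real n * lw i\<bar> \<le> real m" using Mb that by blast
      then have "real (M i) \<ge> real n * lw i - real m" by linarith
      then have "real (M i) \<ge> real (1 + L * d)" using NK[OF nN that] unfolding K_def by simp
      then show ?thesis by linarith
    qed
    define c where "c i = M i - (1 + L * d)" for i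
    have cM: "M i = c i + 1 + L * d" if "i \<in> {1..m}" for i using Mge[OF that] unfolding c_def by simp
    define s where "s = (\<Sum>i=1..m. real (M i) *\<^sub>R v i)"
    have snorm: "norm s \<le> Cb"
    proof -
      have "s = (\<Sum>i=1..m. (real (M i) - real n * lw i) *\<^sub>R v i)"
      proof -
        have "(\<Sum>i=1..m. (real n * lw i) *\<^sub>R v i) = real n *\<^sub>R (\<Sum>i\<in>{1..m}. lw i *\<^sub>R v i)"
          by (simp add: scaleR_sum_right)
        then have "(\<Sum>i=1..m. (real n * lw i) *\<^sub>R v i) = 0" using lwv by simp
        then show ?thesis unfolding s_def by (simp add: scaleR_diff_left sum_subtractf)
      qed
      also have "norm \<dots> \<le> (\<Sum>i=1..m. norm ((real (M i) - real n * lw i) *\<^sub>R v i))"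
        by (rule norm_sum)
      also have "\<dots> \<le> (\<Sum>i=1..m. real m * norm (v i))"
        by (rule sum_mono) (use Mb in \<open>auto intro: mult_right_mono\<close>)
      also have "\<dots> = Cb" unfolding Cb_def by (simp add: sum_distrib_left)
      finally show ?thesis .
    qed
    define ctr where "ctr = (\<Sum>i=1..m. \<Sum>b\<in>(Basis::'v set). f (x i))"
    define g where "g = ctr - (1 / real L) *\<^sub>R s"
    have "dist ctr g = norm s / real L" unfolding g_def dist_norm using L1 by simp
    also have "\<dots> < \<delta>" using snorm LC L1 by (simp add: divide_less_eq mult.commute)
    finally obtain t where tt: "\<forall>i\<in>{1..m}. \<forall>b\<in>(Basis::'v set). q i b t \<in> topspace X"
      and tg: "(\<Sum>i=1..m. \<Sum>b\<in>(Basis::'v set). f (q i b t)) = g"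
      using qP[rule_format, of g] unfolding ctr_def mem_ball by blast
    obtain bl where bl: "set bl = (Basis::'v set)" "distinct bl"
      using finite_distinct_list[OF finite_Basis] by blast
    define Q where "Q = concat (map (\<lambda>i. map (\<lambda>b. q i b t) bl) [1..<m+1])"
    define zs where "zs = map x [1..<m+1] @ (concat (replicate L Q) @ concat (map (\<lambda>i. replicate (c i) (x i)) [1..<m+1]))"
    have sQ: "sum_list (map f Q) = g"
      unfolding Q_def sum_list_concat_map map_map o_def tg[symmetric]
      by (simp only: sum_list_upt1 sum_list_distinct_conv_sum_set[OF bl(2)] bl(1))
    have ctr: "ctr = real d *\<^sub>R (\<Sum>i=1..m. v i)"
      unfolding ctr_def d_def v_def by (simp add: scaleR_sum_right sum_constant_scaleR)
    have "sum_list (map f zs) = (\<Sum>i=1..m. v i) + real L *\<^sub>R g + (\<Sum>i=1..m. real (c i) *\<^sub>R v i)"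
      unfolding zs_def
      by (simp del: upt_Suc add: sum_list_upt1 sum_list_concat_map sum_list_replicate_R sum_list_replicate_R' sum_list_upt1' sQ v_def map_replicate
          o_def)
    also have "\<dots> = 0"
    proof -
      have h1: "real L *\<^sub>R g = real L *\<^sub>R ctr - s" unfolding g_def using L1 by (simp add: algebra_simps)
      have h2: "s = (\<Sum>i=1..m. (real (c i) + 1 + real L * real d) *\<^sub>R v i)"
        unfolding s_def by (intro sum.cong refl) (simp add: cM)
      have h3: "(\<Sum>i=1..m. (real (c i) + 1 + real L * real d) *\<^sub>R v i)
          = (\<Sum>i=1..m. real (c i) *\<^sub>R v i) + (\<Sum>i=1..m. v i) + (real L * real d) *\<^sub>R (\<Sum>i=1..m. v i)"
        by (simp add: scaleR_add_left sum.distrib scaleR_sum_right)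
      have h4: "real L *\<^sub>R ctr = (real L * real d) *\<^sub>R (\<Sum>i=1..m. v i)" unfolding ctr by simp
      have "real L *\<^sub>R g = - (\<Sum>i=1..m. real (c i) *\<^sub>R v i) - (\<Sum>i=1..m. v i)"
        unfolding h1 h2 h3 h4 by simp
      then show ?thesis by simp
    qed
    finally have z0: "sum_list (map f zs) = 0" .
    have lenQ: "length Q = m * d"
      unfolding Q_def by (simp del: upt_Suc add: length_concat o_def sum_list_upt1 sum_list_upt1' d_def bl
          flip: distinct_card[OF bl(2)])
    have "length zs = m + L * (m * d) + (\<Sum>i=1..m. c i)"
      unfolding zs_def by (simp del: upt_Suc add: length_concat o_def sum_list_upt1 sum_list_upt1' lenQ length_concat_rep sum_list_replicate)
    also have "\<dots> = n"
    proof -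
      have "n = (\<Sum>i=1..m. c i + 1 + L * d)" unfolding Msum[symmetric] by (intro sum.cong refl) (simp add: cM)
      also have "\<dots> = (\<Sum>i=1..m. c i) + (\<Sum>i=1..m. (1::nat)) + (\<Sum>i=1..m. L * d)"
        by (simp only: sum.distrib)
      also have "\<dots> = (\<Sum>i=1..m. c i) + m + m * (L * d)" by simp
      finally show ?thesis by (simp add: algebra_simps)
    qed
    finally have lenz: "length zs = n" .
    have topz: "\<forall>z\<in>set zs. z \<in> topspace X"
      unfolding zs_def Q_def using xin tt bl(1) by (auto simp del: upt_Suc)
    show ?thesis
      by (rule from_list[OF sm smf span lenz topz _ z0]) (simp add: zs_def)
  qed
  then show ?thesis by blast
qed

end
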